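(* Assume Hypotheses (LD) and (LD0). Then for every $\delta_0>0$ there exists an open neighborhood $V_0$ of $M_0$ such that $$\lim_{\varepsilon\to0}\frac{\beta_{\delta_0}(\varepsilon)}{\inf_{x\in V_0}p^\varepsilon(x,M_0)}=0.$$
   Context: Setting. Let $M\subset\mathbb{R}^d$ be closed; all topological notions are relative to $M$. Let $F:M\to M$ be continuous with $\|F\|:=\sup_{x\in M}\|F(x)\|<\infty$. For $A\subset M$ and $\delta>0$, put $N^\delta(A)=\{x\in M:\inf_{y\in A}\|x-y\|<\delta\}$, and let $d(x,y)=\max_i|x_i-y_i|$. Let $\{X^\varepsilon\}_{\varepsilon>0}$ be a family of time-homogeneous Markov chains on $M$ with transition kernels $p^\varepsilon(x,\Gamma)$. Put $\beta_\delta(\varepsilon):=\sup_{x\in M}p^\varepsilon(x,M\setminus N^\delta(F(x)))$. Assume $M=M_0\cup M_1$ (disjoint), where $M_0$ is closed, $F(M_0)\subseteq M_0$, $F(M_1)\subseteq M_1$, and $p^\varepsilon(x,M_1)=0$ for all $\varepsilon>0$ and $x\in M_0$. Hypothesis (LD). There is $\rho:M\times M\to[0,+\infty]$ such that: (i) $\rho$ is continuous on $M_1\times M$; (ii) $\rho(x,y)=0$ iff $y=F(x)$; (iii) for every $\beta>0$, $\inf\{\rho(x,y):x,y\in M,\ d(F(x),y)>\beta\}>0$; (iv) lower bound: for every compact $K\subset M_1$, every open ball $U$ of $M$ and every $\eta>0$, there is $\varepsilon_0>0$ such that $\varepsilon\log p^\varepsilon(x,U)\ge-\inf_{y\in U}\rho(x,y)-\eta$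 for all $x\in K$ and $\varepsilon<\varepsilon_0$; (v) upper bound: for every closed $C\subset M$ and every $\eta>0$, there is $\varepsilon_0>0$ such that $\varepsilon\log p^\varepsilon(x,C)\le-\inf_{y\in C}\rho(x,y)+\eta$ for all $x\in M$ and $\varepsilon<\varepsilon_0$. Hypothesis (LD0). For every $c>0$ there is an open neighborhood $V_0$ of $M_0$ with $\liminf_{\varepsilon\to0}\inf_{x\in V_0}\varepsilon\log p^\varepsilon(x,M_0)\ge-c$. *)

theory Defs
  imports "HOL-Probability.Probability"
begin

definition dmax :: "real^'d \<Rightarrow> real^'d \<Rightarrow> real" where
  "dmax x y = Max (range (\<lambda>i. \<bar>x$i - y$i\<bar>))"

definition elog :: "real \<Rightarrow> ereal" where
  "elog t = (if t > 0 then ereal (ln t) else -\<infinity>)"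

definition pk :: "(real \<Rightarrow> real^'d \<Rightarrow> (real^'d) measure) \<Rightarrow> real \<Rightarrow> real^'d \<Rightarrow> (real^'d) set \<Rightarrow> real" where
  "pk K e x G = measure (K e x) G"

definition beta :: "(real \<Rightarrow> real^'d \<Rightarrow> (real^'d) measure) \<Rightarrow> (real^'d) set \<Rightarrow> (real^'d \<Rightarrow> real^'d)
    \<Rightarrow> real \<Rightarrow> real \<Rightarrow> ereal" where
  "beta K M F \<delta> e = (SUP x\<in>M. ereal (pk K e x (M - {y\<in>M. norm (y - F x) < \<delta>})))"

end

theory Submission
  imports Defs "HOL-Real_Asymp.Real_Asymp"
begin

lemma dmax_bound: "norm (a - b) \<le> real CARD('d) * dmax (a::real^'d) b"
proof -
  have "norm (a - b) \<le> (\<Sum>i\<in>UNIV. \<bar>(a-b)$i\<bar>)" by (rule norm_le_l1_cart)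
  also have "\<dots> \<le> (\<Sum>i\<in>(UNIV::'d set). dmax a b)"
    by (intro sum_mono) (auto simp: dmax_def intro!: Max_ge)
  finally show ?thesis by simp
qed

lemma elog_upper: assumes "e > 0" "ereal e * elog p \<le> ereal r" "p \<ge> 0"
  shows "p \<le> exp (r / e)"
proof (cases "p > 0")
  case True
  then have "e * ln p \<le> r" using assms by (simp add: elog_def)
  then have "ln p \<le> r / e" using assms by (simp add: field_simps)
  then show ?thesis using True by (metis exp_ln exp_le_cancel_iff)
next
  case False then show ?thesis using assms by simp
qed

lemma elog_lower: assumes "e > 0" "ereal e * elog p > ereal r"
  shows "p \<ge> exp (r / e)"
proof (cases "p > 0")
  case True
  then have "e * ln p > r" using assms by (simp add: elog_def)
  then have "ln p > r / e" using assms by (simp add: field_simps)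
  then show ?thesis using True by (metis exp_ln exp_le_cancel_iff less_imp_le)
next
  case False then show ?thesis using assms by (simp add: elog_def)
qed

lemma lim_exp: assumes "c > 0" shows "((\<lambda>e. exp (- c / e)) \<longlongrightarrow> (0::real)) (at_right 0)"
  using assms by real_asymp

lemma ediv_bound: assumes "0 \<le> b" "b \<le> ereal a" "D \<ge> ereal d" "d > 0"
  shows "b / D \<le> ereal (a / d)" "0 \<le> b / D"
proof -
  obtain r where r: "b = ereal r" using assms by (cases b) auto
  have "0 \<le> a" using assms r by auto
  show "b / D \<le> ereal (a / d)"
  proof (cases D)
    case (real t)
    then have "r / t \<le> a / d" using assms r by (intro frac_le) auto
    then show ?thesis using real r assms by simp
  next
    case PInf then show ?thesis using r \<open>0 \<le> a\<close> assms by simp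
  next
    case MInf then show ?thesis using assms by simp
  qed
  show "0 \<le> b / D"
    using assms r by (cases D) auto
qed
theorem mainTheorem10:
  fixes M M0 M1 :: "(real^'d) set"
    and F :: "real^'d \<Rightarrow> real^'d"
    and K :: "real \<Rightarrow> real^'d \<Rightarrow> (real^'d) measure"
    and \<rho> :: "real^'d \<Rightarrow> real^'d \<Rightarrow> ereal"
  assumes M_closed: "closed M"
    and F_cont: "continuous_on M F" and F_maps: "F ` M \<subseteq> M" and F_bdd: "bounded (F ` M)"
    and K_prob: "\<And>e x. e > 0 \<Longrightarrow> x \<in> M \<Longrightarrow> prob_space (K e x)"
    and K_sets: "\<And>e x. e > 0 \<Longrightarrow> x \<in> M \<Longrightarrow> sets (K e x) = sets borel"
    and K_supp: "\<And>e x. e > 0 \<Longrightarrow> x \<in> M \<Longrightarrow> emeasure (K e x) (UNIV - M) = 0"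
    and M_split: "M = M0 \<union> M1" and M_disj: "M0 \<inter> M1 = {}"
    and M0_closed: "closed M0"
    and F_M0: "F ` M0 \<subseteq> M0" and F_M1: "F ` M1 \<subseteq> M1"
    and M0_absorb: "\<And>e x. e > 0 \<Longrightarrow> x \<in> M0 \<Longrightarrow> pk K e x M1 = 0"
    (* Hypothesis (LD) *)
    and rho_nonneg: "\<And>x y. x \<in> M \<Longrightarrow> y \<in> M \<Longrightarrow> \<rho> x y \<ge> 0"
    and LD_i: "continuous_on (M1 \<times> M) (\<lambda>z. \<rho> (fst z) (snd z))"
    and LD_ii: "\<And>x y. x \<in> M \<Longrightarrow> y \<in> M \<Longrightarrow> (\<rho> x y = 0 \<longleftrightarrow> y = F x)"
    and LD_iii: "\<And>b. b > 0 \<Longrightarrow>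
        0 < (INF xy\<in>{(x, y). x \<in> M \<and> y \<in> M \<and> dmax (F x) y > b}. \<rho> (fst xy) (snd xy))"
    and LD_iv: "\<And>C c r \<eta>. compact C \<Longrightarrow> C \<subseteq> M1 \<Longrightarrow> c \<in> M \<Longrightarrow> r > 0 \<Longrightarrow> \<eta> > 0 \<Longrightarrow>
        \<exists>e0>0. \<forall>x\<in>C. \<forall>e. 0 < e \<and> e < e0 \<longrightarrow>
          ereal e * elog (pk K e x (ball c r \<inter> M))
            \<ge> - (INF y\<in>ball c r \<inter> M. \<rho> x y) - ereal \<eta>"
    and LD_v: "\<And>C \<eta>. closed C \<Longrightarrow> C \<subseteq> M \<Longrightarrow> \<eta> > 0 \<Longrightarrow>
        \<exists>e0>0. \<forall>x\<in>M. \<forall>e. 0 < e \<and> e < e0 \<longrightarrow>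
          ereal e * elog (pk K e x C) \<le> - (INF y\<in>C. \<rho> x y) + ereal \<eta>"
    (* Hypothesis (LD0) *)
    and LD0: "\<And>c. c > 0 \<Longrightarrow> \<exists>V0. openin (top_of_set M) V0 \<and> M0 \<subseteq> V0 \<and>
        Liminf (at_right 0) (\<lambda>e. INF x\<in>V0. ereal e * elog (pk K e x M0)) \<ge> - ereal c"
    and delta0_pos: "\<delta>0 > 0"
  shows "\<exists>V0. openin (top_of_set M) V0 \<and> M0 \<subseteq> V0 \<and>
     (\<forall>\<^sub>F e in at_right 0. 0 < (INF x\<in>V0. ereal (pk K e x M0))) \<and>
     ((\<lambda>e. beta K M F \<delta>0 e / (INF x\<in>V0. ereal (pk K e x M0))) \<longlongrightarrow> 0) (at_right 0)"
proof -
  define n where "n = real CARD('d)"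
  have npos: "n > 0" unfolding n_def by simp
  define b where "b = \<delta>0 / (4 * n)"
  have bpos: "b > 0" using delta0_pos npos unfolding b_def by simp
  define c0 where "c0 = (INF xy\<in>{(x, y). x \<in> M \<and> y \<in> M \<and> dmax (F x) y > b}. \<rho> (fst xy) (snd xy))"
  have c0pos: "0 < c0" using LD_iii[OF bpos] unfolding c0_def .
  obtain cr where cr: "0 < cr" "ereal cr < c0"
    using c0pos by (metis ereal_dense2 ereal_less(2) less_trans zero_ereal_def)
  have rho_big: "\<rho> x y \<ge> ereal cr" if "x \<in> M" "y \<in> M" "norm (y - F x) \<ge> \<delta>0/2" for x y
  proof -
    have "norm (F x - y) \<le> n * dmax (F x) y" using dmax_bound unfolding n_def by blast
    moreover have "norm (F x - y) = norm (y - F x)" by (rule norm_minus_commute)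
    ultimately have "\<delta>0/2 \<le> n * dmax (F x) y" using that by linarith
    then have "dmax (F x) y > b" unfolding b_def using npos delta0_pos
      by (simp add: field_simps)
    then have "c0 \<le> \<rho> (fst (x,y)) (snd (x,y))" unfolding c0_def
      by (intro INF_lower) (use that in auto)
    then show ?thesis using cr by simp
  qed
  have "compact (closure (F ` M))" using F_bdd by (simp add: compact_closure)
  then obtain T where T: "finite T" "closure (F ` M) \<subseteq> (\<Union>t\<in>T. ball t (\<delta>0/4))"
    using compact_eq_totally_bounded delta0_pos by (metis divide_pos_pos zero_less_numeral)
  define C where "C t = M - ball t (3*\<delta>0/4)" for t
  have Cclosed: "closed (C t)" for t unfolding C_def using M_closed
    by (simp add: closed_Diff)
  have "\<forall>t\<in>T. \<exists>e0>0. \<forall>x\<in>M. \<forall>e. 0 < e \<and> e < e0 \<longrightarrow>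
          ereal e * elog (pk K e x (C t)) \<le> - (INF y\<in>C t. \<rho> x y) + ereal (cr/4)"
  proof
    fix t assume "t \<in> T"
    show "\<exists>e0>0. \<forall>x\<in>M. \<forall>e. 0 < e \<and> e < e0 \<longrightarrow>
          ereal e * elog (pk K e x (C t)) \<le> - (INF y\<in>C t. \<rho> x y) + ereal (cr/4)"
      by (rule LD_v[OF Cclosed]) (use cr in \<open>auto simp: C_def\<close>)
  qed
  then have "\<exists>f. \<forall>t\<in>T. f t > 0 \<and> (\<forall>x\<in>M. \<forall>e. 0 < e \<and> e < f t \<longrightarrow>
          ereal e * elog (pk K e x (C t)) \<le> - (INF y\<in>C t. \<rho> x y) + ereal (cr/4))"
    by (rule bchoice)
  then obtain e0f where e0fH: "\<forall>t\<in>T. e0f t > 0 \<and> (\<forall>x\<in>M. \<forall>e. 0 < e \<and> e < e0f t \<longrightarrow>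
          ereal e * elog (pk K e x (C t)) \<le> - (INF y\<in>C t. \<rho> x y) + ereal (cr/4))"
    by (elim exE)
  have e0f: "\<And>t. t \<in> T \<Longrightarrow> e0f t > 0"
    "\<And>t x e. t \<in> T \<Longrightarrow> x \<in> M \<Longrightarrow> 0 < e \<Longrightarrow> e < e0f t \<Longrightarrow>
          ereal e * elog (pk K e x (C t)) \<le> - (INF y\<in>C t. \<rho> x y) + ereal (cr/4)"
    using e0fH by blast+
  define e0 where "e0 = Min (insert 1 (e0f ` T))"
  have e0pos: "e0 > 0" unfolding e0_def using T(1) e0f(1) by (subst Min_gr_iff) auto
  have e0le: "e0 \<le> e0f t" if "t \<in> T" for t unfolding e0_def using T(1) that by (intro Min_le) auto
  have pbound: "pk K e x (M - {y\<in>M. norm (y - F x) < \<delta>0}) \<le> exp (- (3*cr/4) / e)"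
    if x: "x \<in> M" and e: "0 < e" "e < e0" for x e
  proof -
    have "F x \<in> closure (F ` M)" by (rule closure_subset[THEN subsetD], rule imageI, rule x)
    then have "F x \<in> (\<Union>t\<in>T. ball t (\<delta>0/4))" using T(2) by (rule subsetD[rotated])
    then obtain t where t: "t \<in> T" "dist t (F x) < \<delta>0/4" unfolding mem_ball[symmetric] by (rule UN_E)
    have sub: "M - {y\<in>M. norm (y - F x) < \<delta>0} \<subseteq> C t"
    proof
      fix y assume y: "y \<in> M - {y\<in>M. norm (y - F x) < \<delta>0}"
      have "dist t y \<ge> dist y (F x) - dist t (F x)"
        using dist_triangle[of y "F x" t] by (simp add: dist_commute)
      moreover have "dist y (F x) \<ge> \<delta>0" using y by (auto simp: dist_norm)
      ultimately show "y \<in> C t" using y t unfolding C_def by auto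
    qed
    have Cfar: "norm (y - F x) \<ge> \<delta>0/2" if "y \<in> C t" for y
    proof -
      have "dist t y \<ge> 3*\<delta>0/4" using that unfolding C_def by auto
      moreover have "dist t y \<le> dist t (F x) + dist y (F x)"
        using dist_triangle[of t y "F x"] by (simp add: dist_commute)
      ultimately show ?thesis using t by (simp add: dist_norm)
    qed
    have "ereal cr \<le> (INF y\<in>C t. \<rho> x y)"
      by (rule INF_greatest) (use rho_big x Cfar C_def in auto)
    then have "- (INF y\<in>C t. \<rho> x y) + ereal (cr/4) \<le> - ereal cr + ereal (cr/4)"
      by (intro add_right_mono) (metis ereal_minus_le_minus)
    also have "\<dots> = ereal (- (3*cr/4))" by simp
    finally have "ereal e * elog (pk K e x (C t)) \<le> ereal (- (3*cr/4))"
      using e0f(2)[OF t(1) x e(1)] e0le[OF t(1)] e by (meson order.trans less_le_trans)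
    then have "pk K e x (C t) \<le> exp (- (3*cr/4) / e)"
      by (rule elog_upper[OF e(1)]) (simp add: pk_def)
    moreover have "pk K e x (M - {y\<in>M. norm (y - F x) < \<delta>0}) \<le> pk K e x (C t)"
    proof -
      interpret prob_space "K e x" using K_prob e x by auto
      have "C t \<in> sets (K e x)" using K_sets[OF e(1) x] Cclosed by simp
      then show ?thesis unfolding pk_def using sub by (rule finite_measure_mono[rotated])
    qed
    ultimately show ?thesis by linarith
  qed
  obtain V0 where V0: "openin (top_of_set M) V0" "M0 \<subseteq> V0"
    "Liminf (at_right 0) (\<lambda>e. INF x\<in>V0. ereal e * elog (pk K e x M0)) \<ge> - ereal (cr/4)"
    using LD0[of "cr/4"] cr by auto
  have "ereal (- (cr/2)) < Liminf (at_right 0) (\<lambda>e. INF x\<in>V0. ereal e * elog (pk K e x M0))"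
  proof -
    have "ereal (- (cr/2)) < ereal (- (cr/4))" using cr by simp
    also have "\<dots> \<le> Liminf (at_right 0) (\<lambda>e. INF x\<in>V0. ereal e * elog (pk K e x M0))"
      using V0(3) by simp
    finally show ?thesis .
  qed
  then have ev1: "\<forall>\<^sub>F e in at_right 0. ereal (- (cr/2)) < (INF x\<in>V0. ereal e * elog (pk K e x M0))"
    by (rule less_LiminfD)
  have ev2: "\<forall>\<^sub>F e in at_right 0. 0 < e \<and> e < e0"
    using e0pos by (simp add: eventually_at_right_field) (metis)
  have evD: "\<forall>\<^sub>F e in at_right 0. 0 < e \<and> e < e0 \<and>
       ereal (exp (- (cr/2) / e)) \<le> (INF x\<in>V0. ereal (pk K e x M0))"
    using ev1 ev2
  proof eventually_elim
    case (elim e)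
    have "ereal (exp (- (cr/2) / e)) \<le> ereal (pk K e x M0)" if "x \<in> V0" for x
    proof -
      have "ereal (- (cr/2)) < ereal e * elog (pk K e x M0)"
        using elim(1) that by (meson INF_lower less_le_trans)
      then have "exp (- (cr/2) / e) \<le> pk K e x M0" using elim(2) by (intro elog_lower) auto
      then show ?thesis by simp
    qed
    then show ?case using elim(2) by (auto intro: INF_greatest)
  qed
  show ?thesis
  proof (intro exI conjI)
    show "openin (top_of_set M) V0" "M0 \<subseteq> V0" by (fact V0(1), fact V0(2))
    show "\<forall>\<^sub>F e in at_right 0. 0 < (INF x\<in>V0. ereal (pk K e x M0))"
      using evD
    proof eventually_elim
      case (elim e)
      have "(0::ereal) < ereal (exp (- (cr/2) / e))" by simp
      then show ?case using elim by (meson less_le_trans)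
    qed
    show "((\<lambda>e. beta K M F \<delta>0 e / (INF x\<in>V0. ereal (pk K e x M0))) \<longlongrightarrow> 0) (at_right 0)"
    proof (cases "V0 = {}")
      case True then show ?thesis by (simp add: top_ereal_def)
    next
      case False
      then have Mne: "M \<noteq> {}" using V0(1) by (auto dest: openin_subset)
      have lim: "((\<lambda>e. ereal (exp (- (cr/4) / e))) \<longlongrightarrow> ereal 0) (at_right 0)"
        using lim_exp[of "cr/4"] cr by (intro tendsto_ereal) auto
      show ?thesis
      proof (rule tendsto_sandwich[OF _ _ tendsto_const lim[unfolded zero_ereal_def[symmetric]]])
        have bnds: "0 \<le> beta K M F \<delta>0 e \<and> beta K M F \<delta>0 e \<le> ereal (exp (- (3*cr/4) / e))"
          if "0 < e" "e < e0" for e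
        proof
          obtain x where "x \<in> M" using Mne by auto
          then show "0 \<le> beta K M F \<delta>0 e" unfolding beta_def
            by (rule SUP_upper2) (simp add: pk_def)
          show "beta K M F \<delta>0 e \<le> ereal (exp (- (3*cr/4) / e))" unfolding beta_def
            using pbound that by (auto intro!: SUP_least)
        qed
        have ratio: "exp (- (3*cr/4) / e) / exp (- (cr/2) / e) = exp (- (cr/4) / e)" for e
          by (simp add: exp_diff[symmetric] field_simps)
        show "\<forall>\<^sub>F e in at_right 0. 0 \<le> beta K M F \<delta>0 e / (INF x\<in>V0. ereal (pk K e x M0))"
          using evD by eventually_elim (use bnds ediv_bound(2) in force)
        show "\<forall>\<^sub>F e in at_right 0. beta K M F \<delta>0 e / (INF x\<in>V0. ereal (pk K e x M0)) \<le> ereal (exp (- (cr/4) / e))"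
          using evD
        proof eventually_elim
          case (elim e)
          have "beta K M F \<delta>0 e / (INF x\<in>V0. ereal (pk K e x M0))
              \<le> ereal (exp (- (3*cr/4) / e) / exp (- (cr/2) / e))"
            using bnds[of e] elim by (intro ediv_bound(1)) auto
          then show ?case by (simp only: ratio)
        qed
      qed
    qed
  qed
qed

end
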